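(* For $n\ge 0$ let $K_{1,n}$ be the star graph on $n+1$ vertices (one center vertex adjacent to $n$ leaves, no other edges; $K_{1,0}$ is a single vertex). Then $$\sum_{n\ge 0}\mathrm{sa}(K_{1,n};t)\,\frac{x^n}{n!} = e^{tx}\,(t-\tanh x).$$
   Context: All graphs are finite, simple and undirected. For a graph $G=(V,E)$ and $V'\subseteq V$, $G|_{V'}$ denotes the induced subgraph on $V'$. The signed a-number $\mathrm{sa}(G)$ is defined recursively: $\mathrm{sa}(G)=1$ if $G$ is the empty graph (no vertices); $\mathrm{sa}(G)=0$ if $G$ has a connected component with an odd number of vertices; otherwise $\mathrm{sa}(G)=-\sum_{V'\subsetneq V}\mathrm{sa}(G|_{V'})$. The signed a-polynomial of $G$ is $\mathrm{sa}(G;t)=\sum_{V'\subseteq V}\mathrm{sa}(G|_{V'})\,t^{|V\setminus V'|}$. *)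

theory Defs
  imports Complex_Main "HOL-Computational_Algebra.Formal_Power_Series"
begin

text \<open>A finite simple graph is given by a finite vertex set V and a symmetric irreflexive
  edge relation E.  The induced subgraph on W \<subseteq> V is (W, E) (edges restricted to W).\<close>

definition edges_in :: "('a \<Rightarrow> 'a \<Rightarrow> bool) \<Rightarrow> 'a set \<Rightarrow> ('a \<times> 'a) set" where
  "edges_in E V = {(u, v). u \<in> V \<and> v \<in> V \<and> E u v}"

definition component :: "('a \<Rightarrow> 'a \<Rightarrow> bool) \<Rightarrow> 'a set \<Rightarrow> 'a \<Rightarrow> 'a set" where
  "component E V v = {u \<in> V. (v, u) \<in> (edges_in E V)\<^sup>*}"

definition has_odd_component :: "('a \<Rightarrow> 'a \<Rightarrow> bool) \<Rightarrow> 'a set \<Rightarrow> bool" where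
  "has_odd_component E V = (\<exists>v\<in>V. odd (card (component E V v)))"

text \<open>Signed a-number of the graph (V, E); only meaningful for finite V.\<close>
function sa :: "('a \<Rightarrow> 'a \<Rightarrow> bool) \<Rightarrow> 'a set \<Rightarrow> int" where
  "sa E V = (if V = {} then 1
             else if \<not> finite V then 0
             else if has_odd_component E V then 0
             else - (\<Sum>W\<in>{W. W \<subset> V}. sa E W))"
  by pat_completeness auto
termination
  apply (relation "measure (\<lambda>(E, V). card V)")
   apply auto
  by (metis card_seteq not_le)

definition sa_poly :: "('a \<Rightarrow> 'a \<Rightarrow> bool) \<Rightarrow> 'a set \<Rightarrow> real \<Rightarrow> real" where
  "sa_poly E V t = (\<Sum>W\<in>Pow V. of_int (sa E W) * t ^ card (V - W))"

definition star_edge :: "nat \<Rightarrow> nat \<Rightarrow> bool" where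
  "star_edge u v = ((u = 0 \<and> v \<noteq> 0) \<or> (v = 0 \<and> u \<noteq> 0))"

definition star_vertices :: "nat \<Rightarrow> nat set" where
  "star_vertices n = {0..n}"

definition fps_tanh :: "real fps" where
  "fps_tanh = (fps_exp 1 - fps_exp (-1)) / (fps_exp 1 + fps_exp (-1))"

end

theory Submission
  imports Defs
begin


fun sk :: "nat \<Rightarrow> int" where
  "sk k = (if odd k then -1 - (\<Sum>j<k. int (k choose j) * sk j) else 0)"

declare sk.simps[simp del] sa.simps[simp del]

lemma sum_pow_card:
  fixes f :: "nat \<Rightarrow> 'b::comm_ring_1"
  assumes "finite A"
  shows "(\<Sum>L\<in>Pow A. f (card L)) = (\<Sum>k\<le>card A. of_nat (card A choose k) * f k)"
proof -
  have "(\<Sum>L\<in>Pow A. f (card L)) = (\<Sum>k\<le>card A. \<Sum>L\<in>{L. L \<in> Pow A \<and> card L = k}. f (card L))"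
    by (rule sum.group[symmetric]) (use assms card_mono in auto)
  also have "\<dots> = (\<Sum>k\<le>card A. of_nat (card A choose k) * f k)"
  proof (rule sum.cong[OF refl])
    fix k
    have "(\<Sum>L\<in>{L. L \<in> Pow A \<and> card L = k}. f (card L)) = (\<Sum>L\<in>{L. L \<subseteq> A \<and> card L = k}. f k)"
      by (rule sum.cong) auto
    also have "\<dots> = of_nat (card A choose k) * f k"
      using n_subsets[OF assms, of k] by simp
    finally show "(\<Sum>L\<in>{L. L \<in> Pow A \<and> card L = k}. f (card L)) = of_nat (card A choose k) * f k" .
  qed
  finally show ?thesis .
qed

lemma sum_psub_card:
  fixes f :: "nat \<Rightarrow> 'b::comm_ring_1"
  assumes "finite A"
  shows "(\<Sum>L\<in>{L. L \<subset> A}. f (card L)) = (\<Sum>k<card A. of_nat (card A choose k) * f k)"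
proof -
  have e: "{L. L \<subset> A} = Pow A - {A}" by auto
  have "(\<Sum>L\<in>Pow A. f (card L)) = f (card A) + (\<Sum>L\<in>Pow A - {A}. f (card L))"
    using assms by (subst sum.remove[of _ A]) auto
  moreover have "(\<Sum>k\<le>card A. of_nat (card A choose k) * f k) = f (card A) + (\<Sum>k<card A. of_nat (card A choose k) * f k)"
    by (simp add: lessThan_Suc_atMost[symmetric])
  ultimately show ?thesis using sum_pow_card[OF assms, of f] e by simp
qed

lemma comp_no0:
  assumes "0 \<notin> W" "v \<in> W"
  shows "component star_edge W v = {v}"
proof -
  have "\<forall>a\<in>W. a \<noteq> 0" using assms by metis
  then have "edges_in star_edge W = {}" unfolding edges_in_def star_edge_def by auto
  then show ?thesis using assms unfolding component_def by auto
qed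

lemma comp_0:
  assumes "0 \<in> W" "v \<in> W"
  shows "component star_edge W v = W"
proof -
  have "(v, u) \<in> (edges_in star_edge W)\<^sup>*" if "u \<in> W" for u
  proof -
    have e: "a \<in> W \<Longrightarrow> b \<in> W \<Longrightarrow> star_edge a b \<Longrightarrow> (a, b) \<in> (edges_in star_edge W)\<^sup>*" for a b
      unfolding edges_in_def by auto
    show ?thesis
    proof (cases "v = u")
      case False
      show ?thesis
      proof (cases "v = 0 \<or> u = 0")
        case True then show ?thesis using e[of v u] that assms False by (auto simp: star_edge_def)
      next
        case F: False
        have "(v, 0) \<in> (edges_in star_edge W)\<^sup>*" using e[of v 0] assms F by (auto simp: star_edge_def)
        moreover have "(0, u) \<in> (edges_in star_edge W)\<^sup>*" using e[of 0 u] assms that F by (auto simp: star_edge_def)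
        ultimately show ?thesis by (rule rtrancl_trans)
      qed
    qed simp
  qed
  then show ?thesis unfolding component_def by auto
qed

lemma sa_empty: "sa E {} = 1" by (subst sa.simps) simp

lemma sa_no0:
  assumes "finite W" "0 \<notin> W" "W \<noteq> {}"
  shows "sa star_edge W = 0"
proof -
  from assms obtain v where "v \<in> W" by auto
  then have "has_odd_component star_edge W" unfolding has_odd_component_def
    using comp_no0[OF assms(2)] by force
  then show ?thesis using assms by (subst sa.simps) simp
qed

lemma sa_star:
  "finite W \<Longrightarrow> 0 \<in> W \<Longrightarrow> sa star_edge W = sk (card W - 1)"
proof (induct "card W" arbitrary: W rule: less_induct)
  case less
  define A where "A = W - {0}"
  have fA: "finite A" using less A_def by auto
  have cW: "card W = Suc (card A)" using less A_def
    by (metis card_Suc_Diff1)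
  have hoc: "has_odd_component star_edge W \<longleftrightarrow> odd (card W)"
    using comp_0[OF less(3)] less(3) unfolding has_odd_component_def by auto
  show ?case
  proof (cases "odd (card W)")
    case True
    then have "even (card W - 1)" using cW by simp
    then show ?thesis using True hoc less by (subst sa.simps) (auto simp: sk.simps)
  next
    case False
    have split: "{W'. W' \<subset> W} = Pow A \<union> insert 0 ` {L. L \<subset> A}"
    proof (intro set_eqI iffI)
      fix W' assume "W' \<in> {W'. W' \<subset> W}"
      then show "W' \<in> Pow A \<union> insert 0 ` {L. L \<subset> A}"
      proof (cases "0 \<in> W'")
        case True
        then have "W' = insert 0 (W' - {0})" by auto
        moreover have "W' - {0} \<subset> A" using \<open>W' \<in> _\<close> True unfolding A_def by auto
        ultimately show ?thesis by blast
      qed (auto simp: A_def)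
    next
      fix W' assume "W' \<in> Pow A \<union> insert 0 ` {L. L \<subset> A}"
      then show "W' \<in> {W'. W' \<subset> W}" using less(3) unfolding A_def by auto
    qed
    have disj: "Pow A \<inter> insert 0 ` {L. L \<subset> A} = {}" by (auto simp: A_def)
    have s1: "(\<Sum>W'\<in>Pow A. sa star_edge W') = 1"
    proof -
      have "(\<Sum>W'\<in>Pow A. sa star_edge W') = sa star_edge {} + (\<Sum>W'\<in>Pow A - {{}}. sa star_edge W')"
        using fA by (subst sum.remove[of _ "{}"]) auto
      also have "(\<Sum>W'\<in>Pow A - {{}}. sa star_edge W') = 0"
      proof (rule sum.neutral, rule ballI)
        fix x assume "x \<in> Pow A - {{}}"
        then show "sa star_edge x = 0" using fA by (intro sa_no0) (auto simp: A_def dest: finite_subset)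
      qed
      finally show ?thesis by (simp add: sa.simps)
    qed
    have s2: "(\<Sum>W'\<in>insert 0 ` {L. L \<subset> A}. sa star_edge W') = (\<Sum>k<card A. int (card A choose k) * sk k)"
    proof -
      have inj: "inj_on (insert 0) {L. L \<subset> A}"
        unfolding inj_on_def A_def by blast
      have "(\<Sum>W'\<in>insert 0 ` {L. L \<subset> A}. sa star_edge W') = (\<Sum>L\<in>{L. L \<subset> A}. sa star_edge (insert 0 L))"
        by (rule sum.reindex[OF inj, unfolded comp_def])
      also have "\<dots> = (\<Sum>L\<in>{L. L \<subset> A}. sk (card L))"
      proof (rule sum.cong[OF refl])
        fix L assume L: "L \<in> {L. L \<subset> A}"
        then have fL: "finite L" using fA finite_subset by auto
        have n0: "0 \<notin> L" using L A_def by auto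
        have "card L < card A" using L fA psubset_card_mono by auto
        then have "card (insert 0 L) < card W" using cW fL n0 by simp
        then have "sa star_edge (insert 0 L) = sk (card (insert 0 L) - 1)"
          using less(1)[of "insert 0 L"] fL by simp
        then show "sa star_edge (insert 0 L) = sk (card L)" using fL n0 by simp
      qed
      also have "\<dots> = (\<Sum>k<card A. int (card A choose k) * sk k)"
        by (rule sum_psub_card[OF fA])
      finally show ?thesis .
    qed
    have fin2: "finite {L. L \<subset> A}" using fA by (metis (no_types, lifting) Pow_iff finite_Pow_iff mem_Collect_eq psubset_imp_subset rev_finite_subset subsetI)
    have "(\<Sum>W'\<in>{W'. W' \<subset> W}. sa star_edge W') = 1 + (\<Sum>k<card A. int (card A choose k) * sk k)"
      unfolding split using s1 s2 disj fA fin2 by (subst sum.union_disjoint) auto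
    moreover have "odd (card A)" using False cW by simp
    moreover have "sa star_edge W = - (\<Sum>W'\<in>{W'. W' \<subset> W}. sa star_edge W')"
      using hoc False less(2,3) by (subst sa.simps) auto
    moreover have "sk (card A) = -1 - (\<Sum>k<card A. int (card A choose k) * sk k)"
      using \<open>odd (card A)\<close> by (subst sk.simps) simp
    moreover have e: "card W - 1 = card A" using cW by simp
    ultimately show ?thesis unfolding e by linarith
  qed
qed




lemma sa_poly_star:
  "sa_poly star_edge (star_vertices n) t =
     t^(n+1) + (\<Sum>k\<le>n. of_nat (n choose k) * (of_int (sk k) * t^(n-k)))"
proof -
  define A where "A = {1..n}"
  have V: "star_vertices n = insert 0 A" by (auto simp: star_vertices_def A_def)
  have fA: "finite A" and n0: "0 \<notin> A" and cA: "card A = n" by (auto simp: A_def)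
  have split: "Pow (insert 0 A) = Pow A \<union> insert 0 ` Pow A" by (rule Pow_insert)
  have disj: "Pow A \<inter> insert 0 ` Pow A = {}" using n0 by auto
  define g where "g W = of_int (sa star_edge W) * t ^ card (insert 0 A - W)" for W
  have s1: "(\<Sum>W\<in>Pow A. g W) = t^(n+1)"
  proof -
    have "(\<Sum>W\<in>Pow A. g W) = g {} + (\<Sum>W\<in>Pow A - {{}}. g W)"
      using fA by (subst sum.remove[of _ "{}"]) auto
    also have "(\<Sum>W\<in>Pow A - {{}}. g W) = 0"
    proof (rule sum.neutral, rule ballI)
      fix x assume "x \<in> Pow A - {{}}"
      then have x: "x \<subseteq> A" "x \<noteq> {}" by auto
      then have "finite x" using fA rev_finite_subset by blast
      then have "sa star_edge x = 0" using x n0 by (intro sa_no0) auto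
      then show "g x = 0" by (simp add: g_def)
    qed
    finally show ?thesis using fA n0 cA by (simp add: g_def sa_empty)
  qed
  have s2: "(\<Sum>W\<in>insert 0 ` Pow A. g W) = (\<Sum>k\<le>n. of_nat (n choose k) * (of_int (sk k) * t^(n-k)))"
  proof -
    have inj: "inj_on (insert 0) (Pow A)"
    proof (rule inj_onI)
      fix x y assume "x \<in> Pow A" "y \<in> Pow A" "insert 0 x = insert (0::nat) y"
      then have "0 \<notin> x" "0 \<notin> y" using n0 by auto
      then show "x = y" using \<open>insert 0 x = insert 0 y\<close> by (metis Diff_insert_absorb)
    qed
    have "(\<Sum>W\<in>insert 0 ` Pow A. g W) = (\<Sum>L\<in>Pow A. g (insert 0 L))"
      by (rule sum.reindex[OF inj, unfolded comp_def])
    also have "\<dots> = (\<Sum>L\<in>Pow A. of_int (sk (card L)) * t^(n - card L))"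
    proof (rule sum.cong[OF refl])
      fix L assume L: "L \<in> Pow A"
      then have fL: "finite L" using fA rev_finite_subset by blast
      have nL: "0 \<notin> L" using L n0 by auto
      have "sa star_edge (insert 0 L) = sk (card L)" using sa_star[of "insert 0 L"] fL nL by simp
      moreover have "insert 0 A - insert 0 L = A - L" using n0 by auto
      moreover have "card (A - L) = n - card L" using L fL fA cA by (simp add: card_Diff_subset)
      ultimately show "g (insert 0 L) = of_int (sk (card L)) * t^(n - card L)" by (simp add: g_def)
    qed
    also have "\<dots> = (\<Sum>k\<le>n. of_nat (n choose k) * (of_int (sk k) * t^(n-k)))"
      using sum_pow_card[OF fA, of "\<lambda>k. of_int (sk k) * t^(n-k)"] cA by simp
    finally show ?thesis .
  qed
  have fin2: "finite (insert 0 ` Pow A)" using fA by simp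
  have "sa_poly star_edge (star_vertices n) t = (\<Sum>W\<in>Pow (insert 0 A). g W)"
    unfolding sa_poly_def V g_def by simp
  also have "\<dots> = sum g (Pow A) + sum g (insert 0 ` Pow A)"
    unfolding split by (rule sum.union_disjoint) (use fA fin2 disj in auto)
  finally show ?thesis using s1 s2 by simp
qed

lemma sk_even: "even k \<Longrightarrow> sk k = 0" by (subst sk.simps) simp

lemma sk_ident: "(\<Sum>j\<le>k. int (k choose j) * (1 + (-1)^(k-j)) * sk j) = (-1)^k - 1"
proof -
  have trm: "int (k choose j) * (1 + (-1)^(k-j)) * sk j = (if odd k then 2 * (int (k choose j) * sk j) else 0)"
    if "j \<le> k" for j
  proof (cases "even j")
    case True then show ?thesis by (simp add: sk_even)
  next
    case False
    then have ev: "even (k - j) \<longleftrightarrow> odd k" using that by auto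
    show ?thesis
    proof (cases "odd k")
      case True
      then have "(-1::int)^(k-j) = 1" using ev by simp
      then show ?thesis using True by simp
    next
      case F: False
      then have "(-1::int)^(k-j) = -1" using ev by simp
      then show ?thesis using F by simp
    qed
  qed
  have "(\<Sum>j\<le>k. int (k choose j) * (1 + (-1)^(k-j)) * sk j) = (\<Sum>j\<le>k. (if odd k then 2 * (int (k choose j) * sk j) else 0))"
    by (rule sum.cong) (auto simp: trm)
  also have "\<dots> = (-1)^k - 1"
  proof (cases "odd k")
    case True
    have "(\<Sum>j\<le>k. int (k choose j) * sk j) = sk k + (\<Sum>j<k. int (k choose j) * sk j)"
      by (simp add: lessThan_Suc_atMost[symmetric])
    also have "\<dots> = -1" using True by (subst (1) sk.simps) simp
    finally show ?thesis using True by (simp add: sum_distrib_left[symmetric])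
  qed simp
  finally show ?thesis .
qed



definition fS :: "real fps" where "fS = Abs_fps (\<lambda>k. of_int (sk k) / fact k)"

lemma fS_eq: "fS * (fps_exp 1 + fps_exp (-1)) = fps_exp (-1) - fps_exp 1"
proof (rule fps_ext)
  fix k
  have trm: "of_int (sk j) / fact j * ((1 + (-1)^(k-j)) / fact (k-j)) =
        (real (k choose j) * (1 + (-1)^(k-j)) * of_int (sk j)) / fact k" if "j \<le> k" for j
    using that by (simp add: binomial_fact field_simps)
  have "fps_nth (fS * (fps_exp 1 + fps_exp (-1))) k = (\<Sum>j=0..k. of_int (sk j) / fact j * ((1 + (-1)^(k-j)) / fact (k-j)))"
    by (simp add: fps_mult_nth fS_def add_divide_distrib)
  also have "\<dots> = (\<Sum>j\<le>k. (real (k choose j) * (1 + (-1)^(k-j)) * of_int (sk j)) / fact k)"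
    unfolding atLeast0AtMost by (rule sum.cong[OF refl], rule trm) simp
  also have "\<dots> = (\<Sum>j\<le>k. real_of_int (int (k choose j) * (1 + (-1)^(k-j)) * sk j)) / fact k"
    by (simp add: sum_divide_distrib)
  also have "\<dots> = ((-1)^k - 1) / fact k"
    by (subst of_int_sum[symmetric], subst sk_ident) simp
  also have "\<dots> = fps_nth (fps_exp (-1) - fps_exp 1) k"
    by (simp add: diff_divide_distrib)
  finally show "fps_nth (fS * (fps_exp 1 + fps_exp (-1))) k = fps_nth (fps_exp (-1) - fps_exp 1) k" .
qed

lemma tanh_eq: "fps_tanh = - fS"
proof -
  let ?D = "fps_exp (1::real) + fps_exp (-1)"
  have d0: "fps_nth ?D 0 \<noteq> 0" by simp
  have "fps_tanh = (fps_exp 1 - fps_exp (-1)) * inverse ?D"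
    unfolding fps_tanh_def by (rule fps_divide_unit[OF d0])
  also have "fps_exp 1 - fps_exp (-1) = - (fS * ?D)" using fS_eq by simp
  also have "- (fS * ?D) * inverse ?D = - (fS * (?D * inverse ?D))" by (simp add: mult.assoc)
  also have "?D * inverse ?D = 1" by (rule inverse_mult_eq_1'[OF d0])
  finally show ?thesis by simp
qed

theorem mainTheorem4:
  fixes t :: real
  shows "Abs_fps (\<lambda>n. sa_poly star_edge (star_vertices n) t / fact n)
           = fps_exp t * (fps_const t - fps_tanh)"
proof (rule fps_ext)
  fix n
  have trm: "real (n choose k) * (of_int (sk k) * t^(n-k)) / fact n = of_int (sk k) / fact k * (t^(n-k) / fact (n-k))"
    if "k \<le> n" for k
    using that by (simp add: binomial_fact field_simps)
  have "fps_exp t * (fps_const t - fps_tanh) = fps_const t * fps_exp t + fS * fps_exp t"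
    by (simp add: tanh_eq algebra_simps)
  moreover have "fps_nth (fps_const t * fps_exp t) n = t * (t^n / fact n)" by simp
  moreover have "fps_nth (fS * fps_exp t) n = (\<Sum>k=0..n. of_int (sk k) / fact k * (t^(n-k) / fact (n-k)))"
    by (simp add: fps_mult_nth fS_def)
  ultimately have "fps_nth (fps_exp t * (fps_const t - fps_tanh)) n = t * (t^n / fact n) + (\<Sum>k=0..n. of_int (sk k) / fact k * (t^(n-k) / fact (n-k)))"
    by simp
  also have "(\<Sum>k=0..n. of_int (sk k) / fact k * (t^(n-k) / fact (n-k))) = (\<Sum>k\<le>n. real (n choose k) * (of_int (sk k) * t^(n-k)) / fact n)"
    unfolding atLeast0AtMost by (rule sum.cong[OF refl], rule trm[symmetric]) simp
  also have "t * (t^n / fact n) + \<dots> = sa_poly star_edge (star_vertices n) t / fact n"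
    by (simp add: sa_poly_star add_divide_distrib sum_divide_distrib)
  finally show "fps_nth (Abs_fps (\<lambda>n. sa_poly star_edge (star_vertices n) t / fact n)) n = fps_nth (fps_exp t * (fps_const t - fps_tanh)) n"
    by simp
qed

end
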